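(* If $F=\{f_i\}_{i=1}^N$ is an equal norm tight frame for $\mathcal H$ and $G$ is a dual of $F$ such that $(F,G)\in\mathcal F^{(1)}$, then $G=S_F^{-1}F$.
   Context: $\mathcal H$ is a complex Hilbert space of finite dimension $n$, inner product linear in the first argument. A finite sequence $F=\{f_i\}_{i=1}^N$ is a frame if there are $0<A\le B$ with $A\|f\|^2\le\sum_{i}|\langle f,f_i\rangle|^2\le B\|f\|^2$ for all $f$; tight if one can take $A=B$; equal norm if $\|f_i\|$ is constant. $S_Ff=\sum_i\langle f,f_i\rangle f_i$ is the frame operator and $S_F^{-1}F=\{S_F^{-1}f_i\}_{i=1}^N$ the canonical dual. $G=\{g_i\}_{i=1}^N$ is a dual of $F$ if $f=\sum_i\langle f,g_i\rangle f_i$ for all $f$; $(F,G)$ is then an $(N,n)$ dual pair. The error operator for $\Lambda\subseteq\{1,\dots,N\}$ is $E_{\Lambda,F,G}f=\sum_{i\in\Lambda}\langle f,f_i\rangle g_i$. With $\|T\|_{\mathcal F}=\sqrt{\operatorname{tr}(T^*T)}$, $\epsilon^{(1)}_{F,G}=\max_{1\le i\le N}\|E_{\{i\},F,G}\|_{\mathcal F}$, $\epsilon^{(1)}=\inf\{\epsilon^{(1)}_{F,G}:(F,G)\text{ an }(N,n)\text{ dual pair}\}$, $\mathcal F^{(1)}=\{(F,G):\epsilon^{(1)}_{F,G}=\epsilon^{(1)}\}$. *)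

theory Defs
  imports "HOL-Analysis.Analysis"
begin

text \<open>The n-dimensional complex Hilbert space is modelled as complex^'n (n = CARD('n)),
  with inner product linear in the first argument. Finite sequences {f_i}, i=1..N, are
  modelled as functions from a finite index type 'i (N = CARD('i)).\<close>

definition cinner :: "complex^'n \<Rightarrow> complex^'n \<Rightarrow> complex" where
  "cinner f g = (\<Sum>k\<in>UNIV. f$k * cnj (g$k))"

definition is_frame :: "('i::finite \<Rightarrow> complex^'n) \<Rightarrow> bool" where
  "is_frame F \<longleftrightarrow> (\<exists>A B. 0 < A \<and> A \<le> B \<and>
     (\<forall>f. A * (norm f)^2 \<le> (\<Sum>i\<in>UNIV. (cmod (cinner f (F i)))^2) \<and>
          (\<Sum>i\<in>UNIV. (cmod (cinner f (F i)))^2) \<le> B * (norm f)^2))"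

definition tight_frame :: "('i::finite \<Rightarrow> complex^'n) \<Rightarrow> bool" where
  "tight_frame F \<longleftrightarrow> (\<exists>A. 0 < A \<and>
     (\<forall>f. (\<Sum>i\<in>UNIV. (cmod (cinner f (F i)))^2) = A * (norm f)^2))"

definition equal_norm :: "('i::finite \<Rightarrow> complex^'n) \<Rightarrow> bool" where
  "equal_norm F \<longleftrightarrow> (\<forall>i j. norm (F i) = norm (F j))"

definition frame_op :: "('i::finite \<Rightarrow> complex^'n) \<Rightarrow> complex^'n \<Rightarrow> complex^'n" where
  "frame_op F f = (\<Sum>i\<in>UNIV. cinner f (F i) *s F i)"

definition canonical_dual :: "('i::finite \<Rightarrow> complex^'n) \<Rightarrow> 'i \<Rightarrow> complex^'n" where
  "canonical_dual F = (\<lambda>i. inv (frame_op F) (F i))"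

definition is_dual :: "('i::finite \<Rightarrow> complex^'n) \<Rightarrow> ('i \<Rightarrow> complex^'n) \<Rightarrow> bool" where
  "is_dual F G \<longleftrightarrow> (\<forall>f. f = (\<Sum>i\<in>UNIV. cinner f (G i) *s F i))"

definition dual_pair :: "('i::finite \<Rightarrow> complex^'n) \<Rightarrow> ('i \<Rightarrow> complex^'n) \<Rightarrow> bool" where
  "dual_pair F G \<longleftrightarrow> is_frame F \<and> is_dual F G"

definition error_op :: "'i set \<Rightarrow> ('i::finite \<Rightarrow> complex^'n) \<Rightarrow> ('i \<Rightarrow> complex^'n)
    \<Rightarrow> complex^'n \<Rightarrow> complex^'n" where
  "error_op \<Lambda> F G f = (\<Sum>i\<in>\<Lambda>. cinner f (F i) *s G i)"

definition cadj :: "complex^'n^'m \<Rightarrow> complex^'m^'n" where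
  "cadj M = (\<chi> i j. cnj (M$j$i))"

definition frob_norm :: "(complex^'n \<Rightarrow> complex^'n) \<Rightarrow> real" where
  "frob_norm T = sqrt (Re (trace (cadj (matrix T) ** matrix T)))"

definition eps1 :: "('i::finite \<Rightarrow> complex^'n) \<Rightarrow> ('i \<Rightarrow> complex^'n) \<Rightarrow> real" where
  "eps1 F G = Max (range (\<lambda>i. frob_norm (error_op {i} F G)))"

definition eps1_opt :: "'i::finite itself \<Rightarrow> 'n::finite itself \<Rightarrow> real" where
  "eps1_opt _ _ = Inf {eps1 F G | (F :: 'i \<Rightarrow> complex^'n) (G :: 'i \<Rightarrow> complex^'n). dual_pair F G}"

definition in_F1 :: "('i::finite \<Rightarrow> complex^'n) \<Rightarrow> ('i \<Rightarrow> complex^'n) \<Rightarrow> bool" where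
  "in_F1 F G \<longleftrightarrow> dual_pair F G \<and> eps1 F G = eps1_opt TYPE('i) TYPE('n)"

end

theory Submission
  imports Defs
begin

lemma cinner_add_left: "cinner (x + y) z = cinner x z + cinner y z"
  by (simp add: cinner_def distrib_right sum.distrib)
lemma cinner_add_right: "cinner x (y + z) = cinner x y + cinner x z"
  by (simp add: cinner_def distrib_left sum.distrib)
lemma cinner_diff_left: "cinner (x - y) z = cinner x z - cinner y z"
  by (simp add: cinner_def left_diff_distrib sum_subtractf)
lemma cinner_diff_right: "cinner x (y - z) = cinner x y - cinner x z"
  by (simp add: cinner_def right_diff_distrib sum_subtractf)
lemma cinner_scale_left: "cinner (c *s x) z = c * cinner x z"
  by (simp add: cinner_def sum_distrib_left mult.assoc)
lemma cinner_scale_right: "cinner x (c *s z) = cnj c * cinner x z"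
  by (simp add: cinner_def sum_distrib_left mult_ac)
lemma cinner_sum_left: "cinner (\<Sum>i\<in>A. x i) z = (\<Sum>i\<in>A. cinner (x i) z)"
  by (simp add: cinner_def sum_distrib_right sum.swap[of _ A] )
lemma cinner_sym: "cinner y x = cnj (cinner x y)"
  by (simp add: cinner_def mult.commute)
lemma norm_sq_sum: "(norm (x::complex^'n))^2 = (\<Sum>k\<in>UNIV. (cmod (x$k))^2)"
  by (simp add: norm_vec_def L2_set_def sum_nonneg)
lemma cinner_self: "cinner x x = of_real ((norm x)^2)"
  by (simp add: cinner_def norm_sq_sum complex_norm_square[symmetric])
lemma cinner_axis: "cinner (axis k 1) x = cnj (x$k)"
  by (simp add: cinner_def axis_def if_distrib[of "\<lambda>x. x * _"] cong: if_cong)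
lemma cinner_zero_iff: "cinner x x = 0 \<longleftrightarrow> x = 0"
  by (simp add: cinner_self)
lemma norm_add_sq: "(norm (x + y::complex^'n))^2 = (norm x)^2 + 2 * Re (cinner x y) + (norm y)^2"
proof -
  have "complex_of_real ((norm (x+y))^2) = cinner x x + cinner x y + cinner y x + cinner y y"
    by (simp only: cinner_self[symmetric] cinner_add_left cinner_add_right add_ac)
  then have "(norm (x+y))^2 = Re (cinner x x + cinner x y + cinner y x + cinner y y)"
    by (metis Re_complex_of_real)
  then show ?thesis by (simp add: cinner_self cinner_sym[of x y])
qed


lemma polar:
  fixes T :: "complex^'n \<Rightarrow> complex^'n"
  assumes add: "\<And>x y. T (x + y) = T x + T y" and sc: "\<And>c x. T (c *s x) = c *s T x"
    and z: "\<And>f. cinner (T f) f = 0"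
  shows "T f = 0"
proof -
  have e: "cinner (T f) g = 0" for g
  proof -
    have 1: "cinner (T f) g + cinner (T g) f = 0"
      using z[of "f+g"] z[of f] z[of g] by (simp add: add cinner_add_left cinner_add_right add.commute)
    have 2: "- \<i> * cinner (T f) g + \<i> * cinner (T g) f = 0"
      using z[of "f + \<i> *s g"] z[of f] z[of g]
      by (simp add: add sc cinner_add_left cinner_add_right cinner_scale_left cinner_scale_right algebra_simps)
    from 1 have "cinner (T g) f = - cinner (T f) g" by (metis add.commute eq_neg_iff_add_eq_0)
    with 2 have "(-2 * \<i>) * cinner (T f) g = 0" by (simp add: algebra_simps)
    then show ?thesis by simp
  qed
  show ?thesis using e[of "T f"] cinner_zero_iff by blast
qed

lemma frame_op_add: "frame_op F (x + y) = frame_op F x + frame_op F y"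
  by (simp add: frame_op_def cinner_add_left vector_sadd_rdistrib sum.distrib)
lemma frame_op_scale: "frame_op F (c *s x) = c *s frame_op F x"
  by (simp add: frame_op_def cinner_scale_left vec_eq_iff sum_component sum_distrib_left mult.assoc)



lemma cinner_frame_op: fixes F :: "'i::finite \<Rightarrow> complex^'n" shows "cinner (frame_op F f) f = of_real (\<Sum>i\<in>UNIV. (cmod (cinner f (F i)))^2)"
proof -
  have "cinner (frame_op F f) f = (\<Sum>i\<in>UNIV. cinner f (F i) * cnj (cinner f (F i)))"
    by (simp add: frame_op_def cinner_sum_left cinner_scale_left cinner_sym[of "F _" f])
  also have "\<dots> = of_real (\<Sum>i\<in>UNIV. (cmod (cinner f (F i)))^2)"
    by (simp add: complex_norm_square[symmetric])
  finally show ?thesis .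
qed

lemma tight_frame_op: fixes F :: "'i::finite \<Rightarrow> complex^'n"
  assumes "\<And>f. (\<Sum>i\<in>UNIV. (cmod (cinner f (F i)))^2) = A * (norm f)^2"
  shows "frame_op F f = complex_of_real A *s f"
proof -
  define T where "T f = frame_op F f - complex_of_real A *s f" for f
  have "T f = 0"
  proof (rule polar[of T])
    show "T (x + y) = T x + T y" for x y
      by (simp add: T_def frame_op_add vector_sadd_rdistrib vector_add_ldistrib algebra_simps)
    show "T (c *s x) = c *s T x" for c x
      by (simp add: T_def frame_op_scale vector_ssub_ldistrib vector_smult_assoc mult.commute)
    show "cinner (T f) f = 0" for f
      by (simp add: T_def cinner_diff_left cinner_frame_op assms cinner_scale_left cinner_self)
  qed
  then show ?thesis by (simp add: T_def)
qed

lemma sq_cmod_cnj: "(complex_of_real (cmod z))^2 = z * cnj z"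
  by (metis complex_norm_square of_real_power)

lemma frob_err: "frob_norm (error_op {i} F G) = norm (F i) * norm (G i)"
proof -
  have M: "matrix (error_op {i} F G) $ a $ b = cnj (F i $ b) * G i $ a" for a b
    by (simp add: matrix_def error_op_def cinner_axis)
  have "trace (cadj (matrix (error_op {i} F G)) ** matrix (error_op {i} F G))
     = (\<Sum>b\<in>UNIV. \<Sum>a\<in>UNIV. of_real ((cmod (F i $ b))^2 * (cmod (G i $ a))^2))"
    apply (simp add: trace_def matrix_matrix_mult_def cadj_def M)
    apply (intro sum.cong refl)
    apply (simp add: sq_cmod_cnj mult_ac)
    done
  also have "\<dots> = of_real ((norm (F i))^2 * (norm (G i))^2)"
    by (simp only: norm_sq_sum sum_distrib_left sum_distrib_right of_real_sum) (rule sum.swap)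
  finally show ?thesis
    by (simp add: frob_norm_def real_sqrt_mult)
qed



lemma ofreal_s: "complex_of_real r *s x = r *\<^sub>R (x::complex^'n)"
  unfolding scaleR_vec_def by (simp add: vec_eq_iff scaleR_conv_of_real)

lemma cinner_scaleR_left: "cinner (r *\<^sub>R x) y = of_real r * cinner x y"
  by (metis ofreal_s cinner_scale_left)
lemma cinner_scaleR_right: "cinner x (r *\<^sub>R y) = of_real r * cinner x y"
  by (metis ofreal_s cinner_scale_right complex_cnj_complex_of_real)

lemma trace_zero:
  fixes F h :: "'i::finite \<Rightarrow> complex^'n"
  assumes "\<And>f. (\<Sum>i\<in>UNIV. cinner f (h i) *s F i) = 0"
  shows "(\<Sum>i\<in>UNIV. cinner (F i) (h i)) = 0"
proof -
  have k: "(\<Sum>i\<in>UNIV. F i $ k * cnj (h i $ k)) = 0" for k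
  proof -
    have "(\<Sum>i\<in>UNIV. cinner (axis k 1) (h i) *s F i) $ k = 0" using assms by simp
    then show ?thesis by (simp add: sum_component cinner_axis mult.commute)
  qed
  have "(\<Sum>i\<in>UNIV. cinner (F i) (h i)) = (\<Sum>k\<in>UNIV. \<Sum>i\<in>UNIV. F i $ k * cnj (h i $ k))"
    unfolding cinner_def by (rule sum.swap)
  also have "\<dots> = 0" by (simp add: k)
  finally show ?thesis .
qed

theorem corollary3p5:
  fixes F G :: "'i::finite \<Rightarrow> complex^'n"
  assumes "equal_norm F" and "tight_frame F" and "is_dual F G" and "in_F1 F G"
  shows "G = canonical_dual F"
proof -
  obtain A where A0: "0 < A" and hA: "\<And>f. (\<Sum>i\<in>UNIV. (cmod (cinner f (F i)))^2) = A * (norm f)^2"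
    using assms(2) unfolding tight_frame_def by blast
  have S: "frame_op F f = complex_of_real A *s f" for f
    using tight_frame_op[OF hA] .
  define Gc where "Gc i = (1/A) *\<^sub>R F i" for i
  have SGc: "frame_op F (Gc i) = F i" for i
    using A0 by (simp add: S Gc_def ofreal_s)
  have injS: "inj (frame_op F)"
    using A0 by (intro injI) (simp add: S ofreal_s)
  have cd: "canonical_dual F = Gc"
    unfolding canonical_dual_def
    by (rule ext) (metis SGc injS inv_f_f)
  have frame: "is_frame F"
    unfolding is_frame_def using A0 hA by (intro exI[of _ A]) auto
  have dualc: "is_dual F Gc"
    unfolding is_dual_def
  proof
    fix f
    have "(\<Sum>i\<in>UNIV. cinner f (Gc i) *s F i) = complex_of_real (1/A) *s frame_op F f"
      unfolding Gc_def cinner_scaleR_right frame_op_def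
      by (simp add: vec_eq_iff sum_component sum_distrib_left mult.assoc)
    also have "\<dots> = f" using A0 by (simp add: S vector_smult_assoc)
    finally show "f = (\<Sum>i\<in>UNIV. cinner f (Gc i) *s F i)" by simp
  qed
  obtain i0 :: 'i where True by blast
  define d where "d = norm (F i0)"
  have nF: "norm (F i) = d" for i using assms(1) unfolding equal_norm_def d_def by metis
  have nGc: "norm (Gc i) = d / A" for i using A0 by (simp add: Gc_def nF)
  have d0: "d > 0"
  proof (rule ccontr)
    assume "\<not> d > 0"
    then have "F i = 0" for i using nF[of i] by (simp add: d_def)
    obtain k :: 'n where True by blast
    have "(\<Sum>i\<in>UNIV. (cmod (cinner (axis k 1) (F i)))^2) = A * (norm (axis k (1::complex)))^2"
      by (rule hA)
    with \<open>\<And>i. F i = 0\<close> A0 show False by (simp add: cinner_axis)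
  qed
  have epsnn: "eps1 F' G' \<ge> 0" for F' G' :: "'i \<Rightarrow> complex^'n"
  proof -
    have "frob_norm (error_op {i0} F' G') \<le> eps1 F' G'"
      unfolding eps1_def by (rule Max_ge) auto
    moreover have "frob_norm (error_op {i0} F' G') \<ge> 0" by (simp add: frob_err)
    ultimately show ?thesis by linarith
  qed
  have epsc: "eps1 F Gc = d * (d / A)"
    unfolding eps1_def frob_err nF nGc by simp
  have "eps1 F G = eps1_opt TYPE('i) TYPE('n)" using assms(4) unfolding in_F1_def by blast
  also have "\<dots> \<le> eps1 F Gc"
    unfolding eps1_opt_def
  proof (rule cInf_lower)
    show "eps1 F Gc \<in> {eps1 F G |(F :: 'i \<Rightarrow> complex^'n) G. dual_pair F G}"
      using frame dualc unfolding dual_pair_def by blast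
    show "bdd_below {eps1 F G |(F :: 'i \<Rightarrow> complex^'n) G. dual_pair F G}"
      by (rule bdd_belowI[of _ 0]) (auto intro: epsnn)
  qed
  finally have epsG: "eps1 F G \<le> d * (d / A)" by (simp add: epsc)
  have nG: "norm (G i) \<le> d / A" for i
  proof -
    have "frob_norm (error_op {i} F G) \<le> eps1 F G"
      unfolding eps1_def by (rule Max_ge) auto
    then have "d * norm (G i) \<le> d * (d / A)" using epsG by (simp add: frob_err nF)
    with d0 show ?thesis by (metis mult_le_cancel_left_pos times_divide_eq_right)
  qed
  define h where "h i = G i - Gc i" for i
  have hz: "(\<Sum>i\<in>UNIV. cinner f (h i) *s F i) = 0" for f
  proof -
    have "(\<Sum>i\<in>UNIV. cinner f (h i) *s F i)
        = (\<Sum>i\<in>UNIV. cinner f (G i) *s F i) - (\<Sum>i\<in>UNIV. cinner f (Gc i) *s F i)"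
      by (simp add: h_def cinner_diff_right vector_sub_rdistrib sum_subtractf)
    also have "\<dots> = f - f"
      using assms(3) dualc unfolding is_dual_def by metis
    finally show ?thesis by simp
  qed
  have tr: "(\<Sum>i\<in>UNIV. Re (cinner (Gc i) (h i))) = 0"
  proof -
    have "(\<Sum>i\<in>UNIV. cinner (Gc i) (h i)) = of_real (1/A) * (\<Sum>i\<in>UNIV. cinner (F i) (h i))"
      by (simp add: Gc_def cinner_scaleR_left sum_distrib_left)
    also have "\<dots> = 0" by (simp add: trace_zero[OF hz])
    finally show ?thesis by (metis Re_sum zero_complex.sel(1))
  qed
  have GE: "G i = Gc i + h i" for i by (simp add: h_def)
  have "(\<Sum>i\<in>UNIV. (norm (G i))^2) = (\<Sum>i\<in>UNIV. (d/A)^2 + 2 * Re (cinner (Gc i) (h i)) + (norm (h i))^2)"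
    by (simp add: GE norm_add_sq nGc)
  also have "\<dots> = (\<Sum>i::'i\<in>UNIV. (d/A)^2) + (\<Sum>i\<in>UNIV. (norm (h i))^2)"
    by (simp add: sum.distrib sum_distrib_left[symmetric] tr)
  finally have eq: "(\<Sum>i\<in>UNIV. (norm (G i))^2) = (\<Sum>i::'i\<in>UNIV. (d/A)^2) + (\<Sum>i\<in>UNIV. (norm (h i))^2)" .
  have "(\<Sum>i\<in>UNIV. (norm (G i))^2) \<le> (\<Sum>i::'i\<in>UNIV. (d/A)^2)"
    by (rule sum_mono) (simp add: nG power_mono)
  with eq have "(\<Sum>i\<in>UNIV. (norm (h i))^2) \<le> 0" by linarith
  then have "(\<Sum>i\<in>UNIV. (norm (h i))^2) = 0" by (simp add: antisym sum_nonneg)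
  then have "\<forall>i\<in>UNIV. (norm (h i))^2 = 0"
    by (subst sum_nonneg_eq_0_iff[symmetric]) auto
  then have "h i = 0" for i by simp
  then show ?thesis by (auto simp: cd h_def fun_eq_iff)
qed


end
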